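(* Let $K$ be a field, $c\in K\setminus\{0\}$, $n\ge1$, and let $f$ be the $c$-frieze of order $n$ associated with an $n$-admissible family $(x_i)_{i\in\mathbb{Z}}$. For all $i,j\in\mathbb{Z}$ with $-1\le j-i\le n$ and $f(i,j)\neq0$: (a) $x_{j+1}=\dfrac{f(i,j+1)-cf(i,j-1)}{f(i,j)}$; (b) $x_{i-1}=\dfrac{f(i-1,j)-cf(i+1,j)}{f(i,j)}$.
   Context: The $c$-continuant polynomials $P_k=P_k^c$ ($k\ge-1$) are defined by $P_{-1}=0$, $P_0=1$, and for $k\ge1$, $P_k(y_1,\dots,y_k)=y_kP_{k-1}(y_1,\dots,y_{k-1})+cP_{k-2}(y_1,\dots,y_{k-2})$. A family $(x_i)_{i\in\mathbb{Z}}$ in $K$ is $n$-admissible if $P_{n+2}(x_i,\dots,x_{i+n+1})=0$ for all $i$. Let $\mathbb{B}_n=\{(i,j)\in\mathbb{Z}^2:-2\le j-i\le n+1\}$. The $c$-frieze of order $n$ associated with $(x_i)$ is $f:\mathbb{B}_n\to K$, $f(i,j)=P_{j-i+1}(x_i,\dots,x_j)$. *)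

theory Defs
  imports Main
begin

fun cont :: "'a::field \<Rightarrow> 'a list \<Rightarrow> 'a" where
  "cont c [] = 1"
| "cont c [y] = y"
| "cont c ys = last ys * cont c (butlast ys) + c * cont c (butlast (butlast ys))"

definition P :: "'a::field \<Rightarrow> int \<Rightarrow> 'a list \<Rightarrow> 'a" where
  "P c k ys = (if k = -1 then 0 else cont c ys)"

definition seg :: "(int \<Rightarrow> 'a) \<Rightarrow> int \<Rightarrow> int \<Rightarrow> 'a list" where
  "seg x i j = map x [i..j]"

definition admissible :: "'a::field \<Rightarrow> nat \<Rightarrow> (int \<Rightarrow> 'a) \<Rightarrow> bool" where
  "admissible c n x \<longleftrightarrow> (\<forall>i. P c (int n + 2) (seg x i (i + int n + 1)) = 0)"

definition in_B :: "nat \<Rightarrow> int \<Rightarrow> int \<Rightarrow> bool" where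
  "in_B n i j \<longleftrightarrow> -2 \<le> j - i \<and> j - i \<le> int n + 1"

definition frieze :: "'a::field \<Rightarrow> (int \<Rightarrow> 'a) \<Rightarrow> int \<Rightarrow> int \<Rightarrow> 'a" where
  "frieze c x i j = P c (j - i + 1) (seg x i j)"

end

theory Submission
  imports Defs
begin

lemma cont_rec:
  assumes "length ys \<ge> 2"
  shows "cont c ys = last ys * cont c (butlast ys) + c * cont c (butlast (butlast ys))"
proof -
  obtain a b zs where "ys = a # b # zs" using assms
    by (metis One_nat_def Suc_1 Suc_le_length_iff)
  thus ?thesis by simp
qed

lemma cont_left:
  "ys \<noteq> [] \<Longrightarrow> cont c (a # ys) = a * cont c ys + c * cont c (tl ys)"
proof (induction "length ys" arbitrary: ys rule: less_induct)
  case less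
  show ?case
  proof (cases "length ys = 1")
    case True
    then obtain z where "ys = [z]" by (metis One_nat_def length_0_conv length_Suc_conv)
    thus ?thesis by (simp add: algebra_simps)
  next
    case False
    then have l2: "length ys \<ge> 2" using less.prems by (cases ys) (auto simp: Suc_le_eq)
    have e1: "cont c (a # ys) = last ys * cont c (a # butlast ys) + c * cont c (a # butlast (butlast ys))"
      proof -
      have "length (butlast ys) \<ge> 1" using l2 by simp
      hence "butlast ys \<noteq> []" by (metis le_zero_eq length_0_conv one_neq_zero)
      thus ?thesis using cont_rec[of "a # ys" c] l2 less.prems by simp
    qed
    have e2: "cont c ys = last ys * cont c (butlast ys) + c * cont c (butlast (butlast ys))"
      using cont_rec l2 by blast
    have h1: "cont c (a # butlast ys) = a * cont c (butlast ys) + c * cont c (tl (butlast ys))"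
      proof -
      have "length (butlast ys) \<ge> 1" using l2 by simp
      hence "butlast ys \<noteq> []" by (metis le_zero_eq length_0_conv one_neq_zero)
      moreover have "length (butlast ys) < length ys" using l2 by simp
      ultimately show ?thesis using less.hyps by blast
    qed
    show ?thesis
    proof (cases "length ys = 2")
      case True
      then obtain u v where uv: "ys = [u, v]"
        by (metis (no_types, lifting) One_nat_def Suc_1 Suc_length_conv length_0_conv)
      thus ?thesis by (simp add: algebra_simps)
    next
      case False
      then have l3: "length ys \<ge> 3" using l2 by simp
      have h2: "cont c (a # butlast (butlast ys)) = a * cont c (butlast (butlast ys)) + c * cont c (tl (butlast (butlast ys)))"
        proof -
      have "length (butlast (butlast ys)) \<ge> 1" using l3 by simp
      hence "butlast (butlast ys) \<noteq> []" by (metis le_zero_eq length_0_conv one_neq_zero)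
      moreover have "length (butlast (butlast ys)) < length ys" using l3 by simp
      ultimately show ?thesis using less.hyps by blast
    qed
      have e3: "cont c (tl ys) = last ys * cont c (tl (butlast ys)) + c * cont c (tl (butlast (butlast ys)))"
      proof -
        have "length (tl ys) \<ge> 1" using l3 by simp
        hence "tl ys \<noteq> []" by (metis le_zero_eq length_0_conv one_neq_zero)
        hence "last (tl ys) = last ys" by (metis last_tl)
        thus ?thesis using cont_rec[of "tl ys" c] l3 by (simp add: butlast_tl)
      qed
      show ?thesis unfolding e1 e2 e3 h1 h2 by (simp add: algebra_simps)
    qed
  qed
qed

lemma seg_snoc: "i \<le> j + 1 \<Longrightarrow> seg x i (j + 1) = seg x i j @ [x (j+1)]"
  unfolding seg_def by (simp add: upto_rec2)

lemma seg_cons: "i - 1 \<le> j \<Longrightarrow> seg x (i - 1) j = x (i - 1) # seg x i j"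
  unfolding seg_def by (simp add: upto_rec1)

lemma seg_len: "length (seg x i j) = nat (j - i + 1)"
  unfolding seg_def by simp

theorem mainTheorem13:
  fixes c :: "'a::field" and x :: "int \<Rightarrow> 'a" and n :: nat and i j :: int
  assumes "c \<noteq> 0" and "n \<ge> 1" and "admissible c n x"
    and "-1 \<le> j - i" and "j - i \<le> int n"
    and "frieze c x i j \<noteq> 0"
  shows "x (j + 1) = (frieze c x i (j + 1) - c * frieze c x i (j - 1)) / frieze c x i j \<and>
         x (i - 1) = (frieze c x (i - 1) j - c * frieze c x (i + 1) j) / frieze c x i j"
proof (cases "j = i - 1")
  case True
  have "seg x i (i - 1) = []" unfolding seg_def by simp
  moreover have "seg x i i = [x i]" unfolding seg_def by simp
  moreover have "seg x (i - 1) (i - 1) = [x (i - 1)]" unfolding seg_def by simp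
  ultimately show ?thesis using True by (simp add: frieze_def P_def)
next
  case False
  hence ji: "j \<ge> i" using assms(4) by simp
  have F: "frieze c x i j = cont c (seg x i j)" unfolding frieze_def P_def using ji by simp
  have ne: "seg x i j \<noteq> []" using seg_len[of x i j] ji by auto
  have a: "frieze c x i (j + 1) = x (j+1) * frieze c x i j + c * frieze c x i (j - 1)"
  proof -
    have "frieze c x i (j+1) = cont c (seg x i j @ [x (j+1)])"
      unfolding frieze_def P_def using ji seg_snoc[of i j x] by simp
    also have "\<dots> = x (j+1) * cont c (seg x i j) + c * cont c (butlast (seg x i j))"
      using cont_rec[of "seg x i j @ [x (j+1)]" c] ne by (cases "seg x i j") auto
    also have "butlast (seg x i j) = seg x i (j - 1)"
      using seg_snoc[of i "j - 1" x] ji by simp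
    finally show ?thesis using F ji unfolding frieze_def P_def by simp
  qed
  have b: "frieze c x (i - 1) j = x (i - 1) * frieze c x i j + c * frieze c x (i + 1) j"
  proof -
    have "frieze c x (i - 1) j = cont c (x (i - 1) # seg x i j)"
      unfolding frieze_def P_def using ji seg_cons[of i j x] by simp
    also have "\<dots> = x (i - 1) * cont c (seg x i j) + c * cont c (tl (seg x i j))"
      using cont_left ne by blast
    also have "tl (seg x i j) = seg x (i + 1) j"
      using seg_cons[of "i+1" j x] ji by simp
    finally show ?thesis using F ji unfolding frieze_def P_def by simp
  qed
  show ?thesis using a b assms(6) by (simp add: field_simps)
qed

end
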